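(* If $W$ is a 1-planar graph on at most six vertices, then $W$ is either of class $\mathcal C_0$ or of class $\mathcal C_2$.
   Context: All graphs are finite, simple and undirected. A drawing is 1-planar if each edge is crossed at most once (adjacent edges never cross, no edge crosses itself); a graph is 1-planar if it has such a drawing. For a 1-planar drawing $D$, $D^\times$ is the plane graph obtained by turning each crossing into a new degree-4 vertex (a false vertex); $N_{D^\times}(c)$ is the neighbour set of a false vertex $c$. A 1-planar graph is of class $\mathcal C_0$ if it has a 1-planar drawing with $|N_{D^\times}(c_1)\cap N_{D^\times}(c_2)|=0$ for all distinct false vertices; for $i\in\{1,2\}$ it is of class $\mathcal C_i$ if it is not of class $\mathcal C_k$ for any $k<i$ and it has a 1-planar drawing with $|N_{D^\times}(c_1)\cap N_{D^\times}(c_2)|\le i$ for all distinct false vertices $c_1,c_2$. *)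

theory Defs
  imports "HOL-Analysis.Analysis"
begin

definition simple_graph :: "'a set \<Rightarrow> 'a set set \<Rightarrow> bool" where
  "simple_graph V E \<longleftrightarrow> finite V \<and>
     (\<forall>e\<in>E. \<exists>u v. u \<in> V \<and> v \<in> V \<and> u \<noteq> v \<and> e = {u, v})"

definition drawing :: "'a set \<Rightarrow> 'a set set \<Rightarrow> ('a \<Rightarrow> complex) \<Rightarrow> ('a set \<Rightarrow> real \<Rightarrow> complex) \<Rightarrow> bool" where
  "drawing V E p \<gamma> \<longleftrightarrow> inj_on p V \<and>
     (\<forall>e\<in>E. arc (\<gamma> e) \<and> {pathstart (\<gamma> e), pathfinish (\<gamma> e)} = p ` e \<and>
        (\<forall>w\<in>V. p w \<in> path_image (\<gamma> e) \<longrightarrow> w \<in> e))"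

definition cr :: "'a set \<Rightarrow> ('a \<Rightarrow> complex) \<Rightarrow> ('a set \<Rightarrow> real \<Rightarrow> complex) \<Rightarrow> 'a set \<Rightarrow> 'a set \<Rightarrow> complex set" where
  "cr V p \<gamma> e f = (path_image (\<gamma> e) \<inter> path_image (\<gamma> f)) - p ` V"

definition one_planar_drawing :: "'a set \<Rightarrow> 'a set set \<Rightarrow> ('a \<Rightarrow> complex) \<Rightarrow> ('a set \<Rightarrow> real \<Rightarrow> complex) \<Rightarrow> bool" where
  "one_planar_drawing V E p \<gamma> \<longleftrightarrow> drawing V E p \<gamma> \<and>
     (\<forall>e\<in>E. \<forall>f\<in>E. e \<noteq> f \<and> e \<inter> f \<noteq> {} \<longrightarrow> cr V p \<gamma> e f = {}) \<and>
     (\<forall>e\<in>E. \<forall>f\<in>E. \<forall>g\<in>E. \<forall>x y. f \<noteq> e \<and> g \<noteq> e \<and> x \<in> cr V p \<gamma> e f \<and> y \<in> cr V p \<gamma> e g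
         \<longrightarrow> f = g \<and> x = y)"

definition one_planar :: "'a set \<Rightarrow> 'a set set \<Rightarrow> bool" where
  "one_planar V E \<longleftrightarrow> (\<exists>p \<gamma>. one_planar_drawing V E p \<gamma>)"

text \<open>In D^x, a false vertex c arising from the crossing of edges e and f has
  neighbour set e \<union> f. Distinct false vertices correspond to distinct crossing pairs.
  The bound k says that any two distinct false vertices share at most k neighbours.\<close>
definition crossing_bound :: "'a set \<Rightarrow> 'a set set \<Rightarrow> ('a \<Rightarrow> complex) \<Rightarrow> ('a set \<Rightarrow> real \<Rightarrow> complex) \<Rightarrow> nat \<Rightarrow> bool" where
  "crossing_bound V E p \<gamma> k \<longleftrightarrow>
     (\<forall>e\<in>E. \<forall>f\<in>E. \<forall>g\<in>E. \<forall>h\<in>E.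
        e \<noteq> f \<and> g \<noteq> h \<and> cr V p \<gamma> e f \<noteq> {} \<and> cr V p \<gamma> g h \<noteq> {} \<and> {e, f} \<noteq> {g, h}
        \<longrightarrow> card ((e \<union> f) \<inter> (g \<union> h)) \<le> k)"

definition has_drawing_bound :: "'a set \<Rightarrow> 'a set set \<Rightarrow> nat \<Rightarrow> bool" where
  "has_drawing_bound V E k \<longleftrightarrow> (\<exists>p \<gamma>. one_planar_drawing V E p \<gamma> \<and> crossing_bound V E p \<gamma> k)"

definition class_C0 :: "'a set \<Rightarrow> 'a set set \<Rightarrow> bool" where
  "class_C0 V E \<longleftrightarrow> has_drawing_bound V E 0"

definition class_C1 :: "'a set \<Rightarrow> 'a set set \<Rightarrow> bool" where
  "class_C1 V E \<longleftrightarrow> \<not> class_C0 V E \<and> has_drawing_bound V E 1"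

definition class_C2 :: "'a set \<Rightarrow> 'a set set \<Rightarrow> bool" where
  "class_C2 V E \<longleftrightarrow> \<not> class_C0 V E \<and> \<not> class_C1 V E \<and> has_drawing_bound V E 2"

end

theory Submission
  imports Defs
begin


definition cross :: "complex \<Rightarrow> complex \<Rightarrow> real" where
  "cross u v = Re u * Im v - Im u * Re v"

lemma on_seg:
  assumes "x \<in> closed_segment a b"
  obtains u where "0 \<le> u" "u \<le> 1" "x = a + of_real u * (b - a)"
proof -
  from assms obtain u where u: "0 \<le> u" "u \<le> 1" "x = (1 - u) *\<^sub>R a + u *\<^sub>R b"
    unfolding closed_segment_def by auto
  have "x = a + of_real u * (b - a)" using u(3) by (simp add: scaleR_conv_of_real algebra_simps)
  then show ?thesis using u that by blast
qed

lemma cross_lin: "cross w (a + of_real u * z) = cross w a + u * cross w z"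
  by (simp add: cross_def algebra_simps)

lemma cross_self: "cross w w = 0" by (simp add: cross_def)

lemma cross_scale: "cross w (of_real u * z) = u * cross w z"
  by (simp add: cross_def algebra_simps)

lemma cross_on_line:
  assumes "x \<in> closed_segment a b" shows "cross (b - a) (x - a) = 0"
proof -
  obtain u where "x = a + of_real u * (b - a)" using on_seg[OF assms] by blast
  then show ?thesis by (simp add: cross_scale cross_self)
qed

lemma L1:
  assumes "cross (b - a) (c - a) * cross (b - a) (d - a) > 0"
  shows "closed_segment a b \<inter> closed_segment c d = {}"
proof (rule ccontr)
  assume "closed_segment a b \<inter> closed_segment c d \<noteq> {}"
  then obtain x where x1: "x \<in> closed_segment a b" and x2: "x \<in> closed_segment c d" by blast
  have z: "cross (b - a) (x - a) = 0" using cross_on_line[OF x1] .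
  obtain u where u: "0 \<le> u" "u \<le> 1" "x = c + of_real u * (d - c)" using on_seg[OF x2] by blast
  have xa: "x - a = (c - a) + of_real u * ((d - a) - (c - a))" unfolding u(3) by (simp add: algebra_simps)
  have "cross (b - a) (x - a) = cross (b - a) (c - a) + u * cross (b - a) ((d - a) - (c - a))"
    by (simp only: xa cross_lin)
  then have "cross (b - a) (x - a) = (1 - u) * cross (b - a) (c - a) + u * cross (b - a) (d - a)"
    by (simp add: cross_def algebra_simps)
  then have eq: "(1 - u) * cross (b - a) (c - a) + u * cross (b - a) (d - a) = 0" using z by simp
  define \<alpha> where "\<alpha> = cross (b - a) (c - a)"
  define \<beta> where "\<beta> = cross (b - a) (d - a)"
  have ab: "\<alpha> * \<beta> > 0" using assms by (simp add: \<alpha>_def \<beta>_def)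
  have e: "(1 - u) * \<alpha> + u * \<beta> = 0" using eq by (simp add: \<alpha>_def \<beta>_def)
  have sg: "(\<alpha> > 0 \<and> \<beta> > 0) \<or> (\<alpha> < 0 \<and> \<beta> < 0)" using ab by (simp add: zero_less_mult_iff)
  show False
  proof (cases "u = 0")
    case True then show False using e sg by auto
  next
    case False
    then have up: "u > 0" using u by simp
    from sg show False
    proof
      assume h: "\<alpha> > 0 \<and> \<beta> > 0"
      have "(1 - u) * \<alpha> \<ge> 0" using h u by simp
      moreover have "u * \<beta> > 0" using h up by simp
      ultimately show False using e by linarith
    next
      assume h: "\<alpha> < 0 \<and> \<beta> < 0"
      have "(1 - u) * \<alpha> \<le> 0" using h u by (simp add: mult_nonneg_nonpos)
      moreover have "u * \<beta> < 0" using h up by (simp add: mult_pos_neg)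
      ultimately show False using e by linarith
    qed
  qed
qed

lemma L2:
  assumes "cross (b - a) (d - c) \<noteq> 0"
    and "x \<in> closed_segment a b" "x \<in> closed_segment c d"
    and "y \<in> closed_segment a b" "y \<in> closed_segment c d"
  shows "x = y"
proof -
  have hx: "cross (b - a) (x - a) = 0" using cross_on_line assms by blast
  have hy: "cross (b - a) (y - a) = 0" using cross_on_line assms by blast
  obtain s where s: "x = c + of_real s * (d - c)" using on_seg[OF assms(3)] by blast
  obtain t where t: "y = c + of_real t * (d - c)" using on_seg[OF assms(5)] by blast
  have xy: "x - y = of_real (s - t) * (d - c)" unfolding s t by (simp add: algebra_simps)
  have "cross (b - a) (x - y) = 0" using hx hy by (simp add: cross_def algebra_simps)
  moreover have "cross (b - a) (x - y) = (s - t) * cross (b - a) (d - c)" by (simp only: xy cross_scale)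
  ultimately have "(s - t) * cross (b - a) (d - c) = 0" by simp
  then have "s = t" using assms(1) by simp
  then show ?thesis using s t by simp
qed

lemma L3:
  assumes "cross (a - w) (b - w) \<noteq> 0"
    and "x \<in> closed_segment w a" "x \<in> closed_segment w b"
  shows "x = w"
proof -
  have hx: "cross (a - w) (x - w) = 0" using cross_on_line assms by blast
  obtain t where t: "x = w + of_real t * (b - w)" using on_seg[OF assms(3)] by blast
  have "cross (a - w) (x - w) = t * cross (a - w) (b - w)" unfolding t by (simp add: cross_scale)
  then have "t = 0" using hx assms(1) by simp
  then show ?thesis using t by simp
qed

lemma L4:
  assumes "cross (b - a) (c - a) \<noteq> 0" shows "c \<notin> closed_segment a b"
  using cross_on_line assms by blast


definition px :: "nat \<Rightarrow> int" where "px k = [5,4,2,8,6,5] ! k"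
definition py :: "nat \<Rightarrow> int" where "py k = [0,2,3,8,4,1] ! k"
definition P :: "nat \<Rightarrow> complex" where "P k = Complex (of_int (px k)) (of_int (py k))"
definition crs :: "nat \<Rightarrow> nat \<Rightarrow> nat \<Rightarrow> int" where
  "crs a b c = (px b - px a) * (py c - py a) - (py b - py a) * (px c - px a)"
definition crsd :: "nat \<Rightarrow> nat \<Rightarrow> nat \<Rightarrow> nat \<Rightarrow> int" where
  "crsd a b c d = (px b - px a) * (py d - py c) - (py b - py a) * (px d - px c)"

lemma cross_P: "cross (P b - P a) (P c - P a) = of_int (crs a b c)"
  by (simp add: cross_def P_def crs_def)
lemma crossd_P: "cross (P b - P a) (P d - P c) = of_int (crsd a b c d)"
  by (simp add: cross_def P_def crsd_def)

definition pe :: "nat \<Rightarrow> nat \<Rightarrow> nat \<Rightarrow> nat \<Rightarrow> bool" where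
  "pe i j a b \<longleftrightarrow> (i = a \<and> j = b) \<or> (i = b \<and> j = a)"
definition inX :: "nat \<Rightarrow> nat \<Rightarrow> nat \<Rightarrow> nat \<Rightarrow> bool" where
  "inX i j k l \<longleftrightarrow> list_ex (\<lambda>(a,b,c,d). (pe i j a b \<and> pe k l c d) \<or> (pe i j c d \<and> pe k l a b))
     [(0,1,2,5),(0,4,3,5),(1,3,2,4)]"

lemma chk_gp: "list_all (\<lambda>a. list_all (\<lambda>b. list_all (\<lambda>c.
   distinct [a,b,c] \<longrightarrow> crs a b c \<noteq> 0) [0..<6]) [0..<6]) [0..<6]"
  unfolding crs_def px_def py_def by code_simp

lemma chk_sep: "list_all (\<lambda>i. list_all (\<lambda>j. list_all (\<lambda>k. list_all (\<lambda>l.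
   distinct [i,j,k,l] \<and> \<not> inX i j k l \<longrightarrow> crs i j k * crs i j l > 0 \<or> crs k l i * crs k l j > 0)
   [0..<6]) [0..<6]) [0..<6]) [0..<6]"
  unfolding crs_def px_def py_def inX_def pe_def by code_simp

lemma chk_par: "list_all (\<lambda>i. list_all (\<lambda>j. list_all (\<lambda>k. list_all (\<lambda>l.
   distinct [i,j,k,l] \<and> inX i j k l \<longrightarrow> crsd i j k l \<noteq> 0)
   [0..<6]) [0..<6]) [0..<6]) [0..<6]"
  unfolding crsd_def px_def py_def inX_def pe_def by code_simp

lemma lall6: "list_all Q [0..<6] \<longleftrightarrow> (\<forall>i<6. Q (i::nat))"
  by (auto simp: list_all_iff)

lemma gp: "a < 6 \<Longrightarrow> b < 6 \<Longrightarrow> c < 6 \<Longrightarrow> distinct [a,b,c] \<Longrightarrow> crs a b c \<noteq> 0"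
  using chk_gp unfolding lall6 by blast
lemma sep: "i < 6 \<Longrightarrow> j < 6 \<Longrightarrow> k < 6 \<Longrightarrow> l < 6 \<Longrightarrow> distinct [i,j,k,l] \<Longrightarrow> \<not> inX i j k l \<Longrightarrow>
   crs i j k * crs i j l > 0 \<or> crs k l i * crs k l j > 0"
  using chk_sep unfolding lall6 by blast
lemma par: "i < 6 \<Longrightarrow> j < 6 \<Longrightarrow> k < 6 \<Longrightarrow> l < 6 \<Longrightarrow> distinct [i,j,k,l] \<Longrightarrow> inX i j k l \<Longrightarrow>
   crsd i j k l \<noteq> 0"
  using chk_par unfolding lall6 by blast


abbreviation SEG :: "nat \<Rightarrow> nat \<Rightarrow> complex set" where "SEG i j \<equiv> closed_segment (P i) (P j)"

lemma N1: "i < 6 \<Longrightarrow> j < 6 \<Longrightarrow> k < 6 \<Longrightarrow> distinct [i,j,k] \<Longrightarrow> P k \<notin> SEG i j"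
  by (rule L4) (use gp[of i j k] in \<open>simp add: cross_P\<close>)

lemma N2: "w < 6 \<Longrightarrow> a < 6 \<Longrightarrow> b < 6 \<Longrightarrow> distinct [w,a,b] \<Longrightarrow> SEG w a \<inter> SEG w b \<subseteq> {P w}"
  using L3[of "P a" "P w" "P b"] gp[of w a b] by (auto simp: cross_P)

lemma N3: "i < 6 \<Longrightarrow> j < 6 \<Longrightarrow> k < 6 \<Longrightarrow> l < 6 \<Longrightarrow> distinct [i,j,k,l] \<Longrightarrow> \<not> inX i j k l \<Longrightarrow>
   SEG i j \<inter> SEG k l = {}"
proof -
  assume a: "i < 6" "j < 6" "k < 6" "l < 6" "distinct [i,j,k,l]" "\<not> inX i j k l"
  from sep[OF a] have "real_of_int (crs i j k * crs i j l) > 0 \<or> real_of_int (crs k l i * crs k l j) > 0"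
    by (simp only: of_int_0_less_iff)
  then show ?thesis
    using L1[of "P j" "P i" "P k" "P l"] L1[of "P l" "P k" "P i" "P j"]
    unfolding cross_P of_int_mult by blast
qed

lemma N4: "i < 6 \<Longrightarrow> j < 6 \<Longrightarrow> k < 6 \<Longrightarrow> l < 6 \<Longrightarrow> distinct [i,j,k,l] \<Longrightarrow> inX i j k l \<Longrightarrow>
   x \<in> SEG i j \<Longrightarrow> x \<in> SEG k l \<Longrightarrow> y \<in> SEG i j \<Longrightarrow> y \<in> SEG k l \<Longrightarrow> x = y"
  using par[of i j k l] L2[of "P j" "P i" "P l" "P k" x y] by (simp add: crossd_P)

lemma chk_inj: "list_all (\<lambda>a. list_all (\<lambda>b. px a = px b \<and> py a = py b \<longrightarrow> a = b) [0..<6]) [0..<6]"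
  unfolding px_def py_def by code_simp

lemma P_inj: "inj_on P {..<6}"
proof (rule inj_onI)
  fix a b assume "a \<in> {..<(6::nat)}" "b \<in> {..<(6::nat)}" "P a = P b"
  then show "a = b" using chk_inj unfolding lall6 by (auto simp: P_def)
qed

lemma inX_sym1: "inX i j k l \<Longrightarrow> inX j i k l" by (auto simp: inX_def pe_def)
lemma inX_sym2: "inX i j k l \<Longrightarrow> inX k l i j" by (auto simp: inX_def pe_def)


definition XS :: "nat set set set" where
  "XS = {{{0,1},{2,5}}, {{0,4},{3,5}}, {{1,3},{2,4}}}"

lemma inX_XS: "inX i j k l \<Longrightarrow> {{i,j},{k,l}} \<in> XS"
  unfolding inX_def pe_def XS_def by (simp add: doubleton_eq_iff)

lemma XS_disj: "A \<in> XS \<Longrightarrow> B \<in> XS \<Longrightarrow> A \<noteq> B \<Longrightarrow> A \<inter> B = {}"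
  unfolding XS_def by (simp add: doubleton_eq_iff; elim disjE; simp add: doubleton_eq_iff)

lemma XS_card: "A \<in> XS \<Longrightarrow> B \<in> XS \<Longrightarrow> A \<noteq> B \<Longrightarrow> card (\<Union>A \<inter> \<Union>B) \<le> 2"
  unfolding XS_def by auto



lemma C1: assumes "inX i j k l" "inX i j k' l'" "distinct [i,j,k,l]" "distinct [i,j,k',l']"
  shows "{k,l} = {k',l'}"
proof -
  have A: "{{i,j},{k,l}} \<in> XS" using assms(1) by (rule inX_XS)
  have B: "{{i,j},{k',l'}} \<in> XS" using assms(2) by (rule inX_XS)
  have m: "{i,j} \<in> {{i,j},{k,l}} \<inter> {{i,j},{k',l'}}" by simp
  have eq: "{{i,j},{k,l}} = {{i,j},{k',l'}}"
  proof (rule ccontr)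
    assume "{{i,j},{k,l}} \<noteq> {{i,j},{k',l'}}"
    then have "{{i,j},{k,l}} \<inter> {{i,j},{k',l'}} = {}" using XS_disj[OF A B] by simp
    then show False using m by simp
  qed
  have n: "{i,j} \<noteq> {k',l'}" using assms(4) by (auto simp: doubleton_eq_iff)
  from eq have "({i,j} = {i,j} \<and> {k,l} = {k',l'}) \<or> ({i,j} = {k',l'} \<and> {k,l} = {i,j})"
    by (simp only: doubleton_eq_iff)
  then show ?thesis using n by blast
qed

lemma C2: assumes "inX i j k l" "inX i' j' k' l'" "{{i,j},{k,l}} \<noteq> {{i',j'},{k',l'}}"
  shows "card ({i,j,k,l} \<inter> {i',j',k',l'}) \<le> 2"
proof -
  have A: "{{i,j},{k,l}} \<in> XS" using assms(1) by (rule inX_XS)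
  have B: "{{i',j'},{k',l'}} \<in> XS" using assms(2) by (rule inX_XS)
  have c: "card (\<Union>{{i,j},{k,l}} \<inter> \<Union>{{i',j'},{k',l'}}) \<le> 2" using XS_card[OF A B assms(3)] .
  have "\<Union>{{i,j},{k,l}} = {i,j,k,l}" "\<Union>{{i',j'},{k',l'}} = {i',j',k',l'}" by auto
  then show ?thesis using c by simp
qed



lemma construct:
  assumes sg: "simple_graph V E" and cV: "card V \<le> 6"
  shows "\<exists>p \<gamma>. one_planar_drawing V E p \<gamma> \<and> crossing_bound V E p \<gamma> 2"
proof -
  have fin: "finite V" using sg simple_graph_def by blast
  obtain h where bij: "bij_betw h V {0..<card V}" using ex_bij_betw_finite_nat[OF fin] by blast
  have inj: "inj_on h V" using bij bij_betw_def by blast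
  have hV: "\<And>v. v \<in> V \<Longrightarrow> h v < 6" using bij cV bij_betw_apply by fastforce
  have hinj: "\<And>a b. a \<in> V \<Longrightarrow> b \<in> V \<Longrightarrow> h a = h b \<longleftrightarrow> a = b" using inj inj_on_eq_iff by metis
  define p where "p = P \<circ> h"
  define \<gamma> where "\<gamma> = (\<lambda>e. linepath (P (Min (h ` e))) (P (Max (h ` e))))"
  have edge: "\<And>e. e \<in> E \<Longrightarrow> \<exists>u v. u \<in> V \<and> v \<in> V \<and> u \<noteq> v \<and> e = {u, v}"
    using sg unfolding simple_graph_def by blast
  have pimg: "path_image (\<gamma> {u,v}) = SEG (h u) (h v)"
    if "u \<in> V" "v \<in> V" "u \<noteq> v" for u v
  proof -
    have "h u \<noteq> h v" using hinj that by blast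
    have im: "h ` {u,v} = {h u, h v}" by simp
    show ?thesis
    proof (cases "h u < h v")
      case True
      then have "Min {h u, h v} = h u" "Max {h u, h v} = h v" by auto
      then show ?thesis by (simp add: \<gamma>_def im)
    next
      case False
      then have "Min {h u, h v} = h v" "Max {h u, h v} = h u" using \<open>h u \<noteq> h v\<close> by auto
      then show ?thesis by (simp add: \<gamma>_def im closed_segment_commute[of "P (h v)"])
    qed
  qed
  have ends: "{pathstart (\<gamma> {u,v}), pathfinish (\<gamma> {u,v})} = p ` {u,v}"
    if "u \<in> V" "v \<in> V" "u \<noteq> v" for u v
  proof -
    have "h u \<noteq> h v" using hinj that by blast
    have im: "h ` {u,v} = {h u, h v}" by simp
    show ?thesis
    proof (cases "h u < h v")
      case True
      then have "Min {h u, h v} = h u" "Max {h u, h v} = h v" by auto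
      then show ?thesis by (simp add: \<gamma>_def im p_def)
    next
      case False
      then have "Min {h u, h v} = h v" "Max {h u, h v} = h u" using \<open>h u \<noteq> h v\<close> by auto
      then show ?thesis by (auto simp: \<gamma>_def im p_def)
    qed
  qed
  have Pne: "P a \<noteq> P b" if "a < 6" "b < 6" "a \<noteq> b" for a b
    using P_inj that by (meson inj_on_eq_iff lessThan_iff)
  have arcs: "arc (\<gamma> {u,v})" if "u \<in> V" "v \<in> V" "u \<noteq> v" for u v
  proof -
    have "h u \<noteq> h v" using hinj that by blast
    moreover have "h u < 6" "h v < 6" using hV that by auto
    ultimately have ne: "P (h u) \<noteq> P (h v)" using Pne by blast
    have im: "h ` {u,v} = {h u, h v}" by simp
    show ?thesis
    proof (cases "h u < h v")
      case True
      then have "Min {h u, h v} = h u" "Max {h u, h v} = h v" by auto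
      then show ?thesis using ne by (simp add: \<gamma>_def im)
    next
      case False
      then have "Min {h u, h v} = h v" "Max {h u, h v} = h u" using \<open>h u \<noteq> h v\<close> by auto
      then show ?thesis using ne by (simp add: \<gamma>_def im)
    qed
  qed
  have pV: "P (h w) \<in> p ` V" if "w \<in> V" for w using that by (auto simp: p_def)
  have shared: "SEG (h a) (h b) \<inter> SEG (h a) (h c) - p ` V = {}"
    if "a \<in> V" "b \<in> V" "c \<in> V" "distinct [a,b,c]" for a b c
  proof -
    have "distinct [h a, h b, h c]" using that hinj by auto
    then have "SEG (h a) (h b) \<inter> SEG (h a) (h c) \<subseteq> {P (h a)}"
      using N2[OF hV[OF that(1)] hV[OF that(2)] hV[OF that(3)]] by blast
    then show ?thesis using pV[OF that(1)] by blast
  qed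
  have key: "\<exists>u v u' v'. u \<in> V \<and> v \<in> V \<and> u' \<in> V \<and> v' \<in> V \<and> e = {u,v} \<and> g = {u',v'} \<and>
      distinct [u,v,u',v'] \<and> inX (h u) (h v) (h u') (h v') \<and>
      cr V p \<gamma> e g = SEG (h u) (h v) \<inter> SEG (h u') (h v') - p ` V"
    if eg: "e \<in> E" "g \<in> E" "e \<noteq> g" "cr V p \<gamma> e g \<noteq> {}" for e g
  proof -
    obtain u v where uv: "u \<in> V" "v \<in> V" "u \<noteq> v" "e = {u,v}" using edge[OF eg(1)] by blast
    obtain u' v' where uv': "u' \<in> V" "v' \<in> V" "u' \<noteq> v'" "g = {u',v'}" using edge[OF eg(2)] by blast
    have pe1: "path_image (\<gamma> e) = SEG (h u) (h v)" using pimg[OF uv(1-3)] uv(4) by simp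
    have pe2: "path_image (\<gamma> g) = SEG (h u') (h v')" using pimg[OF uv'(1-3)] uv'(4) by simp
    have creq: "cr V p \<gamma> e g = SEG (h u) (h v) \<inter> SEG (h u') (h v') - p ` V"
      unfolding cr_def pe1 pe2 ..
    have dist: "distinct [u,v,u',v']"
    proof (rule ccontr)
      assume nd: "\<not> distinct [u,v,u',v']"
      then consider "u = u'" "v \<noteq> v'" | "u = v'" "v \<noteq> u'" | "v = u'" "u \<noteq> v'" | "v = v'" "u \<noteq> u'"
        using uv uv' eg(3) by auto
      then have "cr V p \<gamma> e g = {}"
      proof cases
        case 1
        have "distinct [u,v,v']" using 1 uv uv' by auto
        then show ?thesis using shared[of u v v'] uv uv' creq 1 by simp
      next
        case 2
        have d: "distinct [u,v,u']" using 2 uv uv' by auto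
        have s2: "SEG (h u') (h v') = SEG (h u) (h u')" using 2 closed_segment_commute by metis
        show ?thesis unfolding creq s2 using shared[OF uv(1,2) uv'(1) d] .
      next
        case 3
        have d: "distinct [v,u,v']" using 3 uv uv' by auto
        have s1: "SEG (h u) (h v) = SEG (h v) (h u)" using closed_segment_commute by metis
        show ?thesis unfolding creq s1 using shared[OF uv(2,1) uv'(2) d] 3 by simp
      next
        case 4
        have d: "distinct [v,u,u']" using 4 uv uv' by auto
        have s1: "SEG (h u) (h v) = SEG (h v) (h u)" using closed_segment_commute by metis
        have s2: "SEG (h u') (h v') = SEG (h v) (h u')" using 4 closed_segment_commute by metis
        show ?thesis unfolding creq s1 s2 using shared[OF uv(2,1) uv'(1) d] .
      qed
      then show False using eg(4) by blast
    qed
    have hd: "distinct [h u, h v, h u', h v']" using dist hinj uv uv' by auto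
    have "inX (h u) (h v) (h u') (h v')"
    proof (rule ccontr)
      assume "\<not> inX (h u) (h v) (h u') (h v')"
      then have "SEG (h u) (h v) \<inter> SEG (h u') (h v') = {}"
        using N3[OF hV[OF uv(1)] hV[OF uv(2)] hV[OF uv'(1)] hV[OF uv'(2)] hd] by blast
      then show False using creq eg(4) by blast
    qed
    then show ?thesis using uv uv' dist creq
      by (intro exI[of _ u] exI[of _ v] exI[of _ u'] exI[of _ v']) simp
  qed
  have d1a: "inj_on p V" unfolding p_def
    by (rule comp_inj_on[OF inj]) (rule inj_on_subset[OF P_inj], use hV in auto)
  have d1b: "arc (\<gamma> e) \<and> {pathstart (\<gamma> e), pathfinish (\<gamma> e)} = p ` e \<and>
      (\<forall>w\<in>V. p w \<in> path_image (\<gamma> e) \<longrightarrow> w \<in> e)" if eE: "e \<in> E" for e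
  proof -
    obtain u v where uv: "u \<in> V" "v \<in> V" "u \<noteq> v" "e = {u,v}" using edge[OF eE] by blast
    have a1: "arc (\<gamma> e)" using arcs[OF uv(1-3)] uv(4) by simp
    have a2: "{pathstart (\<gamma> e), pathfinish (\<gamma> e)} = p ` e" using ends[OF uv(1-3)] uv(4) by simp
    have a3: "\<forall>w\<in>V. p w \<in> path_image (\<gamma> e) \<longrightarrow> w \<in> e"
    proof (intro ballI impI)
      fix w assume w: "w \<in> V" "p w \<in> path_image (\<gamma> e)"
      show "w \<in> e"
      proof (rule ccontr)
        assume "w \<notin> e"
        then have "distinct [h u, h v, h w]" using uv w hinj by auto
        then have "P (h w) \<notin> SEG (h u) (h v)" using N1[OF hV[OF uv(1)] hV[OF uv(2)] hV[OF w(1)]] by blast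
        moreover have "p w \<in> SEG (h u) (h v)" using w(2) pimg[OF uv(1-3)] uv(4) by simp
        ultimately show False by (simp add: p_def)
      qed
    qed
    show ?thesis using a1 a2 a3 by blast
  qed
  have d1: "drawing V E p \<gamma>" unfolding drawing_def using d1a d1b by blast
  have d2: "\<forall>e\<in>E. \<forall>f\<in>E. e \<noteq> f \<and> e \<inter> f \<noteq> {} \<longrightarrow> cr V p \<gamma> e f = {}"
  proof (intro ballI impI)
    fix e f assume ef: "e \<in> E" "f \<in> E" "e \<noteq> f \<and> e \<inter> f \<noteq> {}"
    show "cr V p \<gamma> e f = {}"
    proof (rule ccontr)
      assume "cr V p \<gamma> e f \<noteq> {}"
      then obtain u v u' v' where "e = {u,v}" "f = {u',v'}" "distinct [u,v,u',v']"
        using key ef by blast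
      then show False using ef by auto
    qed
  qed
  have d3: "\<forall>e\<in>E. \<forall>f\<in>E. \<forall>g\<in>E. \<forall>x y. f \<noteq> e \<and> g \<noteq> e \<and> x \<in> cr V p \<gamma> e f \<and> y \<in> cr V p \<gamma> e g
         \<longrightarrow> f = g \<and> x = y"
  proof (intro ballI allI impI)
    fix e f g x y assume E3: "e \<in> E" "f \<in> E" "g \<in> E"
      and h: "f \<noteq> e \<and> g \<noteq> e \<and> x \<in> cr V p \<gamma> e f \<and> y \<in> cr V p \<gamma> e g"
    obtain u v u' v' where A: "u \<in> V" "v \<in> V" "u' \<in> V" "v' \<in> V" "e = {u,v}" "f = {u',v'}"
      "distinct [u,v,u',v']" "inX (h u) (h v) (h u') (h v')"
      "cr V p \<gamma> e f = SEG (h u) (h v) \<inter> SEG (h u') (h v') - p ` V"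
      using key[OF E3(1,2)] h by blast
    obtain a b a' b' where B: "a \<in> V" "b \<in> V" "a' \<in> V" "b' \<in> V" "e = {a,b}" "g = {a',b'}"
      "distinct [a,b,a',b']" "inX (h a) (h b) (h a') (h b')"
      using key[OF E3(1,3)] h by blast
    have ab: "(a = u \<and> b = v) \<or> (a = v \<and> b = u)" using A(5) B(5) by (auto simp: doubleton_eq_iff)
    have X2: "inX (h u) (h v) (h a') (h b')" and d2: "distinct [u,v,a',b']"
      using ab B(7,8) inX_sym1 by auto
    have "distinct [h u, h v, h u', h v']" using A hinj by auto
    moreover have "distinct [h u, h v, h a', h b']" using A B d2 hinj by auto
    ultimately have "{h u', h v'} = {h a', h b'}" using C1 A(8) X2 by blast
    then have hfg: "h ` f = h ` g" using A(6) B(6) by simp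
    have sf: "f \<subseteq> V" using A(3,4,6) by auto
    have sgg: "g \<subseteq> V" using B(3,4,6) by auto
    have fg: "f = g" using inj_on_image_eq_iff[OF inj sf sgg] hfg by simp
    have hd: "distinct [h u, h v, h u', h v']" using A hinj by auto
    have "x = y" using N4[OF hV hV hV hV hd A(8)] A(1-4) h A(9) fg by auto
    then show "f = g \<and> x = y" using fg by blast
  qed
  have opd: "one_planar_drawing V E p \<gamma>"
    unfolding one_planar_drawing_def using d1 d2 d3 by blast
  have cb: "crossing_bound V E p \<gamma> 2"
    unfolding crossing_bound_def
  proof (intro ballI impI)
    fix e f g k assume E4: "e \<in> E" "f \<in> E" "g \<in> E" "k \<in> E"
      and h: "e \<noteq> f \<and> g \<noteq> k \<and> cr V p \<gamma> e f \<noteq> {} \<and> cr V p \<gamma> g k \<noteq> {} \<and> {e, f} \<noteq> {g, k}"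
    have h1: "e \<noteq> f" "cr V p \<gamma> e f \<noteq> {}" "g \<noteq> k" "cr V p \<gamma> g k \<noteq> {}"
      using h[THEN conjunct1] h[THEN conjunct2, THEN conjunct1] h[THEN conjunct2, THEN conjunct2, THEN conjunct1]
        h[THEN conjunct2, THEN conjunct2, THEN conjunct2, THEN conjunct1] by - assumption+
    obtain u v u' v' where A: "u \<in> V" "v \<in> V" "u' \<in> V" "v' \<in> V" "e = {u,v}" "f = {u',v'}"
      "inX (h u) (h v) (h u') (h v')"
      using key[OF E4(1,2) h1(1,2)] by blast
    obtain a b a' b' where B: "a \<in> V" "b \<in> V" "a' \<in> V" "b' \<in> V" "g = {a,b}" "k = {a',b'}"
      "inX (h a) (h b) (h a') (h b')"
      using key[OF E4(3,4) h1(3,4)] by blast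
    have sub: "e \<subseteq> V" "f \<subseteq> V" "g \<subseteq> V" "k \<subseteq> V" using A B by auto
    have ne: "{{h u, h v}, {h u', h v'}} \<noteq> {{h a, h b}, {h a', h b'}}"
    proof
      assume "{{h u, h v}, {h u', h v'}} = {{h a, h b}, {h a', h b'}}"
      then have "{h ` e, h ` f} = {h ` g, h ` k}" using A B by simp
      then have "(h ` e = h ` g \<and> h ` f = h ` k) \<or> (h ` e = h ` k \<and> h ` f = h ` g)"
        by (simp add: doubleton_eq_iff)
      then have "(e = g \<and> f = k) \<or> (e = k \<and> f = g)"
        using inj_on_image_eq_iff[OF inj] sub by metis
      then show False using h by auto
    qed
    have "card ((e \<union> f) \<inter> (g \<union> k)) = card (h ` ((e \<union> f) \<inter> (g \<union> k)))"
      using sub by (intro card_image[symmetric] inj_on_subset[OF inj]) auto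
    also have "h ` ((e \<union> f) \<inter> (g \<union> k)) = {h u, h v, h u', h v'} \<inter> {h a, h b, h a', h b'}"
      using inj_on_image_Int[OF inj, of "e \<union> f" "g \<union> k"] sub A B by auto
    also have "card \<dots> \<le> 2" using C2[OF A(7) B(7) ne] .
    finally show "card ((e \<union> f) \<inter> (g \<union> k)) \<le> 2" .
  qed
  show ?thesis using opd cb by blast
qed


lemma edge_card:
  assumes "simple_graph V E" "e \<in> E" shows "card e = 2" "e \<subseteq> V"
  using assms unfolding simple_graph_def by auto

lemma bound1_to_0:
  assumes sg: "simple_graph V E" and cV: "card V \<le> 6"
    and opd: "one_planar_drawing V E p \<gamma>" and cb: "crossing_bound V E p \<gamma> 1"
  shows "crossing_bound V E p \<gamma> 0"
  unfolding crossing_bound_def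
proof (intro ballI impI)
  fix e f g k assume E4: "e \<in> E" "f \<in> E" "g \<in> E" "k \<in> E"
    and h: "e \<noteq> f \<and> g \<noteq> k \<and> cr V p \<gamma> e f \<noteq> {} \<and> cr V p \<gamma> g k \<noteq> {} \<and> {e, f} \<noteq> {g, k}"
  have fin: "finite V" using sg unfolding simple_graph_def by (rule conjunct1)
  have adj: "\<forall>e\<in>E. \<forall>f\<in>E. e \<noteq> f \<and> e \<inter> f \<noteq> {} \<longrightarrow> cr V p \<gamma> e f = {}"
    using opd unfolding one_planar_drawing_def by (rule conjunct1[OF conjunct2])
  have h1: "e \<noteq> f" "cr V p \<gamma> e f \<noteq> {}" "g \<noteq> k" "cr V p \<gamma> g k \<noteq> {}"
      using h[THEN conjunct1] h[THEN conjunct2, THEN conjunct1] h[THEN conjunct2, THEN conjunct2, THEN conjunct1]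
        h[THEN conjunct2, THEN conjunct2, THEN conjunct2, THEN conjunct1] by - assumption+
  have d1: "e \<inter> f = {}" using adj[rule_format, OF E4(1) E4(2)] h1(1,2) by blast
  have d2: "g \<inter> k = {}" using adj[rule_format, OF E4(3) E4(4)] h1(3,4) by blast
  have c: "card e = 2" "card f = 2" "card g = 2" "card k = 2" "e \<subseteq> V" "f \<subseteq> V" "g \<subseteq> V" "k \<subseteq> V"
    using edge_card[OF sg] E4 by auto
  have fe: "finite e" "finite f" "finite g" "finite k" using finite_subset[OF c(5) fin] finite_subset[OF c(6) fin] finite_subset[OF c(7) fin] finite_subset[OF c(8) fin] by - assumption+
  have u1: "card (e \<union> f) = 4" using card_Un_disjoint[OF fe(1,2) d1] c by simp
  have u2: "card (g \<union> k) = 4" using card_Un_disjoint[OF fe(3,4) d2] c by simp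
  have "card ((e \<union> f) \<union> (g \<union> k)) \<le> card V" using c fin by (intro card_mono) auto
  moreover have "card (e \<union> f) + card (g \<union> k) = card ((e \<union> f) \<union> (g \<union> k)) + card ((e \<union> f) \<inter> (g \<union> k))"
    using fe by (intro card_Un_Int) auto
  ultimately have ge: "card ((e \<union> f) \<inter> (g \<union> k)) \<ge> 2" using u1 u2 cV by linarith
  have "card ((e \<union> f) \<inter> (g \<union> k)) \<le> 1" using cb[unfolded crossing_bound_def, rule_format, OF E4 h] .
  then show "card ((e \<union> f) \<inter> (g \<union> k)) \<le> 0" using ge by linarith
qed

theorem lemma6:
  fixes V :: "'a set" and E :: "'a set set"
  assumes "simple_graph V E" and "one_planar V E" and "card V \<le> 6"
  shows "class_C0 V E \<or> class_C2 V E"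
proof (cases "class_C0 V E")
  case True then show ?thesis by (rule disjI1)
next
  case False
  obtain p \<gamma> where pg: "one_planar_drawing V E p \<gamma>" "crossing_bound V E p \<gamma> 2"
    using construct[OF assms(1,3)] by blast
  have b2: "has_drawing_bound V E 2" unfolding has_drawing_bound_def using pg by blast
  have "\<not> class_C1 V E"
  proof
    assume "class_C1 V E"
    then have "has_drawing_bound V E 1" unfolding class_C1_def by blast
    then obtain p \<gamma> where q: "one_planar_drawing V E p \<gamma>" "crossing_bound V E p \<gamma> 1"
      unfolding has_drawing_bound_def by blast
    have "crossing_bound V E p \<gamma> 0" using bound1_to_0[OF assms(1,3) q] .
    then have "has_drawing_bound V E 0" unfolding has_drawing_bound_def using q(1) by blast
    then show False using False unfolding class_C0_def by blast
  qed
  then have "class_C2 V E" unfolding class_C2_def using False b2 by blast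
  then show ?thesis by (rule disjI2)
qed

end
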